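(* The big-O problem (for labelled Markov chains) reduces to the Value-1 problem; in particular, if the Value-1 problem were decidable, the big-O problem for labelled Markov chains would be decidable.
   Context: A (non-negative) weighted automaton is $\langle Q,\Sigma,M,F\rangle$ with finite $Q$, $M:\Sigma\to\mathbb{Q}_{\ge0}^{Q\times Q}$, $F\subseteq Q$; $\nu_s(a_1\cdots a_n)=\sum_{t\in F}(M(a_1)\cdots M(a_n))_{s,t}$. State $s$ is big-O of $s'$ if there is $C>0$ with $\nu_s(w)\le C\nu_{s'}(w)$ for all $w$; the big-O problem asks this for a given automaton and states $s,s'$. A labelled Markov chain is a weighted automaton with $\sum_{q'}\sum_aM(a)(q,q')=1$ for non-final $q$ and no positive-weight transitions out of final states. A probabilistic automaton is a weighted automaton with a start state $q_s$ such that $\sum_{q'}M(a)(q,q')=1$ for all $q,a$; $\Pr_{\mathcal{A}}(w)=\nu_{q_s}(w)$. The Value-1 problem: given a probabilistic automaton $\mathcal{A}$, decide whether for every $\delta>0$ there is $w$ with $\Pr_{\mathcal{A}}(w)>1-\delta$. *)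

theory Defs
  imports Complex_Main "HOL-Library.Nat_Bijection"
begin

datatype recf = Zf | Sf | Idf nat | Cnf recf "recf list" | Prf recf recf | Mnf recf

inductive rec_eval :: "recf \<Rightarrow> nat list \<Rightarrow> nat \<Rightarrow> bool" where
  ev_Z:  "rec_eval Zf xs 0"
| ev_S:  "rec_eval Sf [x] (Suc x)"
| ev_Id: "i < length xs \<Longrightarrow> rec_eval (Idf i) xs (xs ! i)"
| ev_Cn: "length ys = length gs \<Longrightarrow> (\<forall>i<length gs. rec_eval (gs ! i) xs (ys ! i))
          \<Longrightarrow> rec_eval f ys z \<Longrightarrow> rec_eval (Cnf f gs) xs z"
| ev_Pr0: "rec_eval f xs z \<Longrightarrow> rec_eval (Prf f g) (0 # xs) z"
| ev_PrS: "rec_eval (Prf f g) (x # xs) y \<Longrightarrow> rec_eval g (x # y # xs) z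
          \<Longrightarrow> rec_eval (Prf f g) (Suc x # xs) z"
| ev_Mn: "rec_eval f (z # xs) 0 \<Longrightarrow> (\<forall>y<z. \<exists>v. v > 0 \<and> rec_eval f (y # xs) v)
          \<Longrightarrow> rec_eval (Mnf f) xs z"

definition computable :: "(nat \<Rightarrow> nat) \<Rightarrow> bool" where
  "computable f \<longleftrightarrow> (\<exists>p. \<forall>x. rec_eval p [x] (f x))"

text \<open>A weighted automaton (n, Ms, F): states Q = {0..<n}, alphabet {0..<length Ms},
  M(a)(q,q') = Ms!a!q!q', final states F (a list of states).\<close>
type_synonym wa = "nat \<times> rat list list list \<times> nat list"

definition states :: "wa \<Rightarrow> nat" where "states A = fst A"
definition nletters :: "wa \<Rightarrow> nat" where "nletters A = length (fst (snd A))"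
definition wt :: "wa \<Rightarrow> nat \<Rightarrow> nat \<Rightarrow> nat \<Rightarrow> rat" where
  "wt A a q q' = fst (snd A) ! a ! q ! q'"
definition finals :: "wa \<Rightarrow> nat set" where "finals A = set (snd (snd A))"

definition well_formed :: "wa \<Rightarrow> bool" where
  "well_formed A \<longleftrightarrow>
     (\<forall>m \<in> set (fst (snd A)). length m = states A \<and> (\<forall>r \<in> set m. length r = states A \<and> (\<forall>x \<in> set r. x \<ge> 0)))
   \<and> finals A \<subseteq> {0..<states A}"

definition words :: "wa \<Rightarrow> nat list set" where
  "words A = {w. \<forall>a \<in> set w. a < nletters A}"

text \<open>nu A s w = sum over t in F of (M(a1)...M(an))(s,t).\<close>
fun nu :: "wa \<Rightarrow> nat \<Rightarrow> nat list \<Rightarrow> rat" where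
  "nu A s [] = (if s \<in> finals A then 1 else 0)"
| "nu A s (a # w) = (\<Sum>t<states A. wt A a s t * nu A t w)"

definition big_O :: "wa \<Rightarrow> nat \<Rightarrow> nat \<Rightarrow> bool" where
  "big_O A s s' \<longleftrightarrow> (\<exists>C::real. C > 0 \<and> (\<forall>w \<in> words A. real_of_rat (nu A s w) \<le> C * real_of_rat (nu A s' w)))"

definition is_LMC :: "wa \<Rightarrow> bool" where
  "is_LMC A \<longleftrightarrow> well_formed A
     \<and> (\<forall>q<states A. q \<notin> finals A \<longrightarrow> (\<Sum>q'<states A. \<Sum>a<nletters A. wt A a q q') = 1)
     \<and> (\<forall>q<states A. q \<in> finals A \<longrightarrow> (\<forall>q'<states A. \<forall>a<nletters A. wt A a q q' = 0))"

definition is_PA :: "wa \<Rightarrow> nat \<Rightarrow> bool" where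
  "is_PA A qs \<longleftrightarrow> well_formed A \<and> qs < states A
     \<and> (\<forall>q<states A. \<forall>a<nletters A. (\<Sum>q'<states A. wt A a q q') = 1)"

definition value1 :: "wa \<Rightarrow> nat \<Rightarrow> bool" where
  "value1 A qs \<longleftrightarrow> (\<forall>\<delta>::real. \<delta> > 0 \<longrightarrow> (\<exists>w \<in> words A. real_of_rat (nu A qs w) > 1 - \<delta>))"

definition enc_rat :: "rat \<Rightarrow> nat" where
  "enc_rat r = prod_encode (int_encode (fst (quotient_of r)), nat (snd (quotient_of r)))"

definition enc_wa :: "wa \<Rightarrow> nat" where
  "enc_wa A = prod_encode (fst A, prod_encode
     (list_encode (map (\<lambda>m. list_encode (map (\<lambda>r. list_encode (map enc_rat r)) m)) (fst (snd A))),
      list_encode (snd (snd A))))"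

definition enc_bigO_inst :: "wa \<Rightarrow> nat \<Rightarrow> nat \<Rightarrow> nat" where
  "enc_bigO_inst A s s' = prod_encode (enc_wa A, prod_encode (s, s'))"

definition enc_PA :: "wa \<Rightarrow> nat \<Rightarrow> nat" where
  "enc_PA A qs = prod_encode (enc_wa A, qs)"

end

theory Submission
  imports Defs
begin


definition rcomp :: "nat \<Rightarrow> (nat list \<Rightarrow> nat) \<Rightarrow> bool" where
  "rcomp k g \<longleftrightarrow> (\<exists>p. \<forall>xs. length xs = k \<longrightarrow> rec_eval p xs (g xs))"

lemma rc_cong: assumes "rcomp k f" "\<And>xs. length xs = k \<Longrightarrow> f xs = g xs" shows "rcomp k g"
proof -
  obtain p where "\<forall>xs. length xs = k \<longrightarrow> rec_eval p xs (f xs)" using assms(1) unfolding rcomp_def by blast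
  then show ?thesis unfolding rcomp_def using assms(2) by auto
qed

lemma rc_zero: "rcomp k (\<lambda>_. 0)"
  unfolding rcomp_def by (auto intro: ev_Z)

lemma rc_proj: "i < k \<Longrightarrow> rcomp k (\<lambda>xs. xs ! i)"
  unfolding rcomp_def by (auto intro: ev_Id)

lemma rc_compI:
  assumes f: "rcomp m f" and h: "\<And>i. i < m \<Longrightarrow> rcomp k (hs i)"
  shows "rcomp k (\<lambda>xs. f (map (\<lambda>i. hs i xs) [0..<m]))"
proof -
  obtain pf where pf: "\<forall>ys. length ys = m \<longrightarrow> rec_eval pf ys (f ys)"
    using f unfolding rcomp_def by blast
  have "\<forall>i. \<exists>p. i < m \<longrightarrow> (\<forall>xs. length xs = k \<longrightarrow> rec_eval p xs (hs i xs))"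
    using h unfolding rcomp_def by blast
  then obtain ps where ps: "\<And>i xs. i < m \<Longrightarrow> length xs = k \<Longrightarrow> rec_eval (ps i) xs (hs i xs)"
    by (metis (no_types))
  show ?thesis unfolding rcomp_def
  proof (intro exI allI impI)
    fix xs :: "nat list" assume len: "length xs = k"
    show "rec_eval (Cnf pf (map ps [0..<m])) xs (f (map (\<lambda>i. hs i xs) [0..<m]))"
      by (rule ev_Cn[where ys = "map (\<lambda>i. hs i xs) [0..<m]"]) (use pf ps len in auto)
  qed
qed

lemma rc_prim:
  assumes b: "rcomp k b" and s: "rcomp (Suc (Suc k)) s"
  shows "rcomp (Suc k) (\<lambda>ys. rec_nat (b (tl ys)) (\<lambda>i acc. s (i # acc # tl ys)) (hd ys))"
proof -
  obtain pb where pb: "\<forall>ys. length ys = k \<longrightarrow> rec_eval pb ys (b ys)"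
    using b unfolding rcomp_def by blast
  obtain ps where ps: "\<forall>ys. length ys = Suc (Suc k) \<longrightarrow> rec_eval ps ys (s ys)"
    using s unfolding rcomp_def by blast
  have main: "rec_eval (Prf pb ps) (x # xs) (rec_nat (b xs) (\<lambda>i acc. s (i # acc # xs)) x)"
    if len: "length xs = k" for x xs
  proof (induction x)
    case 0
    then show ?case using pb len by (auto intro: ev_Pr0)
  next
    case (Suc x)
    then show ?case using ps len by (auto intro: ev_PrS)
  qed
  show ?thesis unfolding rcomp_def
  proof (intro exI allI impI)
    fix ys :: "nat list" assume "length ys = Suc k"
    then obtain x xs where "ys = x # xs" "length xs = k" by (cases ys) auto
    then show "rec_eval (Prf pb ps) ys (rec_nat (b (tl ys)) (\<lambda>i acc. s (i # acc # tl ys)) (hd ys))"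
      using main by simp
  qed
qed

lemma rc_suc: "rcomp k a \<Longrightarrow> rcomp k (\<lambda>xs. Suc (a xs))"
proof -
  assume a: "rcomp k a"
  have s: "rcomp 1 (\<lambda>ys. Suc (ys ! 0))"
    unfolding rcomp_def by (rule exI[of _ Sf]) (auto simp: length_Suc_conv intro: ev_S)
  show ?thesis
    using rc_compI[OF s, of k "\<lambda>i. a"] a by simp
qed

lemma rc_const: "rcomp k (\<lambda>_. c)"
  by (induction c) (auto intro: rc_zero rc_suc)

lemma rc_comp_list:
  assumes f: "rcomp m f" and h: "\<And>i. i < m \<Longrightarrow> rcomp k (hs i)"
    and eq: "\<And>xs. length xs = k \<Longrightarrow> g xs = f (map (\<lambda>i. hs i xs) [0..<m])"
  shows "rcomp k g"
proof (rule rc_cong[OF rc_compI[OF f h]])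
  fix xs :: "nat list" assume "length xs = k"
  then show "f (map (\<lambda>i. hs i xs) [0..<m]) = g xs" using eq by simp
qed


lemma rc_natrec:
  assumes b: "rcomp k b" and s: "rcomp (Suc (Suc k)) s" and n: "rcomp k n"
  shows "rcomp k (\<lambda>xs. rec_nat (b xs) (\<lambda>i acc. s (i # acc # xs)) (n xs))"
proof (rule rc_comp_list[OF rc_prim[OF b s], where hs = "\<lambda>i. if i = 0 then n else (\<lambda>xs. xs ! (i - 1))"])
  fix i assume "i < Suc k"
  then show "rcomp k (if i = 0 then n else (\<lambda>xs. xs ! (i - 1)))"
    using n by (auto intro: rc_proj)
next
  fix xs :: "nat list" assume len: "length xs = k"
  have "map (\<lambda>i. (if i = 0 then n else (\<lambda>xs. xs ! (i - 1))) xs) [0..<Suc k] = n xs # xs"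
  proof -
    have "map ((!) xs) [0..<k] = xs" unfolding len[symmetric] by (rule map_nth)
    then show ?thesis by (simp only: map_upt_Suc) simp
  qed
  then show "rec_nat (b xs) (\<lambda>i acc. s (i # acc # xs)) (n xs) =
    (\<lambda>ys. rec_nat (b (tl ys)) (\<lambda>i acc. s (i # acc # tl ys)) (hd ys))
      (map (\<lambda>i. (if i = 0 then n else (\<lambda>xs. xs ! (i - 1))) xs) [0..<Suc k])"
    by simp
qed


lemma rc_proj0: "rcomp (Suc k) (\<lambda>xs. xs ! 0)" by (rule rc_proj) simp
lemma rc_proj1: "rcomp (Suc (Suc k)) (\<lambda>xs. xs ! 1)" by (rule rc_proj) simp
lemma rc_proj2: "rcomp (Suc (Suc (Suc k))) (\<lambda>xs. xs ! 2)" by (rule rc_proj) simp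
lemma rc_proj3: "rcomp (Suc (Suc (Suc (Suc k)))) (\<lambda>xs. xs ! 3)" by (rule rc_proj) simp

lemma rc_comp1:
  assumes f: "rcomp 1 f" and a: "rcomp k a"
  shows "rcomp k (\<lambda>xs. f [a xs])"
  by (rule rc_comp_list[OF f, where hs = "\<lambda>i. a"]) (use a in auto)

lemma rc_comp2:
  assumes f: "rcomp 2 f" and a: "rcomp k a" and b: "rcomp k b"
  shows "rcomp k (\<lambda>xs. f [a xs, b xs])"
  by (rule rc_comp_list[OF f, where hs = "\<lambda>i. if i = 0 then a else b"])
     (use a b in \<open>auto simp: upt_conv_Cons\<close>)

lemma rc_comp3:
  assumes f: "rcomp 3 f" and a: "rcomp k a" and b: "rcomp k b" and c: "rcomp k c"
  shows "rcomp k (\<lambda>xs. f [a xs, b xs, c xs])"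
  by (rule rc_comp_list[OF f, where hs = "\<lambda>i. if i = 0 then a else if i = 1 then b else c"])
     (use a b c in \<open>auto simp: upt_conv_Cons\<close>)

lemma rc_lift1: "rcomp 1 (\<lambda>ys. f (ys ! 0)) \<Longrightarrow> rcomp k a \<Longrightarrow> rcomp k (\<lambda>xs. f (a xs))"
  using rc_comp1[of "\<lambda>ys. f (ys ! 0)" k a] by simp

lemma rc_lift2: "rcomp 2 (\<lambda>ys. f (ys ! 0) (ys ! 1)) \<Longrightarrow> rcomp k a \<Longrightarrow> rcomp k b \<Longrightarrow>
   rcomp k (\<lambda>xs. f (a xs) (b xs))"
  using rc_comp2[of "\<lambda>ys. f (ys ! 0) (ys ! 1)" k a b] by simp

lemma rc_lift3: "rcomp 3 (\<lambda>ys. f (ys ! 0) (ys ! 1) (ys ! 2)) \<Longrightarrow> rcomp k a \<Longrightarrow> rcomp k b \<Longrightarrow>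
   rcomp k c \<Longrightarrow> rcomp k (\<lambda>xs. f (a xs) (b xs) (c xs))"
  using rc_comp3[of "\<lambda>ys. f (ys ! 0) (ys ! 1) (ys ! 2)" k a b c] by simp

lemma rc_drop2: assumes a: "rcomp k a" shows "rcomp (Suc (Suc k)) (\<lambda>ys. a (drop 2 ys))"
proof (rule rc_comp_list[OF a, where hs = "\<lambda>i ys. ys ! (i + 2)"])
  fix i assume "i < k" then show "rcomp (Suc (Suc k)) (\<lambda>ys. ys ! (i + 2))" by (intro rc_proj) simp
next
  fix ys :: "nat list" assume "length ys = Suc (Suc k)"
  then show "a (drop 2 ys) = a (map (\<lambda>i. ys ! (i + 2)) [0..<k])"
    by (intro arg_cong[where f = a]) (auto simp: list_eq_iff_nth_eq)
qed

lemma rc_tl: assumes a: "rcomp k a" shows "rcomp (Suc k) (\<lambda>ys. a (tl ys))"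
proof (rule rc_comp_list[OF a, where hs = "\<lambda>i ys. ys ! (i + 1)"])
  fix i assume "i < k" then show "rcomp (Suc k) (\<lambda>ys. ys ! (i + 1))" by (intro rc_proj) simp
next
  fix ys :: "nat list" assume "length ys = Suc k"
  then show "a (tl ys) = a (map (\<lambda>i. ys ! (i + 1)) [0..<k])"
    by (intro arg_cong[where f = a]) (auto simp: list_eq_iff_nth_eq nth_tl)
qed

lemma rc_shiftG:
  assumes G: "rcomp (Suc k) G" and h: "rcomp (Suc (Suc k)) h"
  shows "rcomp (Suc (Suc k)) (\<lambda>ys. G (h ys # drop 2 ys))"
proof (rule rc_comp_list[OF G, where hs = "\<lambda>i. if i = 0 then h else (\<lambda>ys. ys ! (i + 1))"])
  fix i assume "i < Suc k" then show "rcomp (Suc (Suc k)) (if i = 0 then h else (\<lambda>ys. ys ! (i + 1)))"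
    using h by (auto intro: rc_proj)
next
  fix ys :: "nat list" assume len: "length ys = Suc (Suc k)"
  have "map (\<lambda>i. ys ! (Suc i + 1)) [0..<k] = drop 2 ys"
    using len by (auto simp: list_eq_iff_nth_eq)
  then show "G (h ys # drop 2 ys) = G (map (\<lambda>i. (if i = 0 then h else (\<lambda>ys. ys ! (i + 1))) ys) [0..<Suc k])"
    by (simp only: map_upt_Suc) simp
qed

lemma recnat_add: "rec_nat y (\<lambda>i acc. Suc acc) x = x + y"
  by (induction x) auto

lemma rc_add: assumes a: "rcomp k a" and b: "rcomp k b" shows "rcomp k (\<lambda>xs. a xs + b xs)"
  by (rule rc_cong[OF rc_natrec[OF b rc_suc[OF rc_proj1] a]]) (simp add: recnat_add)

lemma recnat_pred: "rec_nat 0 (\<lambda>i acc. i) x = x - 1"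
  by (induction x) auto

lemma rc_pred: assumes a: "rcomp k a" shows "rcomp k (\<lambda>xs. a xs - 1)"
  by (rule rc_cong[OF rc_natrec[OF rc_zero rc_proj0 a]]) (simp add: recnat_pred)

lemma recnat_sub: "rec_nat y (\<lambda>i acc. acc - Suc 0) x = y - x"
  by (induction x) auto

lemma rc_sub: assumes a: "rcomp k a" and b: "rcomp k b" shows "rcomp k (\<lambda>xs. a xs - b xs)"
  by (rule rc_cong[OF rc_natrec[OF a rc_pred[OF rc_proj1] b]]) (simp add: recnat_sub)

lemma recnat_mult: "rec_nat 0 (\<lambda>i acc. acc + y) x = x * y"
  by (induction x) auto

lemma rc_mult: assumes a: "rcomp k a" and b: "rcomp k b" shows "rcomp k (\<lambda>xs. a xs * b xs)"
  by (rule rc_cong[OF rc_natrec[OF rc_zero rc_add[OF rc_proj1 rc_drop2[OF b]] a]]) (simp add: recnat_mult)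

lemma recnat_sum: "rec_nat 0 (\<lambda>i acc. acc + g i) x = (\<Sum>i<x. g i)"
  by (induction x) auto

lemma rc_sum: assumes g: "rcomp (Suc k) g" and n: "rcomp k n"
  shows "rcomp k (\<lambda>xs. \<Sum>i<n xs. g (i # xs))"
  by (rule rc_cong[OF rc_natrec[OF rc_zero rc_add[OF rc_proj1 rc_shiftG[OF g rc_proj0]] n]])
     (simp add: recnat_sum)

definition rpred :: "nat \<Rightarrow> (nat list \<Rightarrow> bool) \<Rightarrow> bool" where
  "rpred k P \<longleftrightarrow> rcomp k (\<lambda>xs. if P xs then 1 else 0)"

lemma rp_le: assumes a: "rcomp k a" and b: "rcomp k b" shows "rpred k (\<lambda>xs. a xs \<le> b xs)"
  unfolding rpred_def by (rule rc_cong[OF rc_sub[OF rc_const rc_sub[OF a b], of 1]]) auto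

lemma rp_lt: assumes a: "rcomp k a" and b: "rcomp k b" shows "rpred k (\<lambda>xs. a xs < b xs)"
  using rp_le[OF rc_suc[OF a] b] by (simp add: Suc_le_eq)

lemma rp_eq: assumes a: "rcomp k a" and b: "rcomp k b" shows "rpred k (\<lambda>xs. a xs = b xs)"
  unfolding rpred_def by (rule rc_cong[OF rc_sub[OF rc_const rc_add[OF rc_sub[OF a b] rc_sub[OF b a]], of 1]]) auto

lemma rp_not: assumes P: "rpred k P" shows "rpred k (\<lambda>xs. \<not> P xs)"
  using P unfolding rpred_def by (rule rc_cong[OF rc_sub[OF rc_const], of _ _ 1]) auto

lemma rp_and: assumes P: "rpred k P" and Q: "rpred k Q" shows "rpred k (\<lambda>xs. P xs \<and> Q xs)"
  using rc_mult[OF P[unfolded rpred_def] Q[unfolded rpred_def]] unfolding rpred_def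
  by (rule rc_cong) auto

lemma rp_or: assumes P: "rpred k P" and Q: "rpred k Q" shows "rpred k (\<lambda>xs. P xs \<or> Q xs)"
  using rp_not[OF rp_and[OF rp_not[OF P] rp_not[OF Q]]] by simp

lemma rc_if: assumes P: "rpred k P" and a: "rcomp k a" and b: "rcomp k b"
  shows "rcomp k (\<lambda>xs. if P xs then a xs else b xs)"
  by (rule rc_cong[OF rc_add[OF rc_mult[OF P[unfolded rpred_def] a] rc_mult[OF rc_sub[OF rc_const P[unfolded rpred_def], of 1] b]]]) auto


lemma triangle_recnat: "triangle n = rec_nat 0 (\<lambda>i acc. acc + Suc i) n"
  by (induction n) auto

lemma rc_triangle: assumes a: "rcomp k a" shows "rcomp k (\<lambda>xs. triangle (a xs))"
  by (rule rc_cong[OF rc_natrec[OF rc_zero rc_add[OF rc_proj1 rc_suc[OF rc_proj0]] a]])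
     (simp add: triangle_recnat)

lemma rc_penc: assumes a: "rcomp k a" and b: "rcomp k b" shows "rcomp k (\<lambda>xs. prod_encode (a xs, b xs))"
  by (rule rc_cong[OF rc_add[OF rc_triangle[OF rc_add[OF a b]] a]]) (simp add: prod_encode_def)

definition pd_s :: "nat \<Rightarrow> nat" where
  "pd_s z = (\<Sum>i<z. if triangle (Suc i) \<le> z then 1 else 0)"
definition fst_dec :: "nat \<Rightarrow> nat" where "fst_dec z = z - triangle (pd_s z)"
definition snd_dec :: "nat \<Rightarrow> nat" where "snd_dec z = pd_s z - fst_dec z"

lemma rc_pd_s: assumes a: "rcomp k a" shows "rcomp k (\<lambda>xs. pd_s (a xs))"
proof (rule rc_lift1[OF _ a])
  have "rcomp 1 (\<lambda>xs. \<Sum>i<xs ! 0. (\<lambda>ys. if triangle (Suc (ys ! 0)) \<le> ys ! 1 then 1 else 0) (i # xs))"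
    by (rule rc_sum[where g = "\<lambda>ys. if triangle (Suc (ys ! 0)) \<le> ys ! 1 then 1 else 0"];
        intro rc_if rp_le rc_triangle rc_suc rc_const rc_proj) simp_all
  then show "rcomp 1 (\<lambda>ys. pd_s (ys ! 0))"
    by (rule rc_cong) (simp add: pd_s_def)
qed

lemma rc_fst_dec: "rcomp k a \<Longrightarrow> rcomp k (\<lambda>xs. fst_dec (a xs))"
  unfolding fst_dec_def by (intro rc_sub rc_triangle rc_pd_s)
lemma rc_snd_dec: "rcomp k a \<Longrightarrow> rcomp k (\<lambda>xs. snd_dec (a xs))"
  unfolding snd_dec_def by (intro rc_sub rc_fst_dec rc_pd_s)

lemma triangle_mono: "i \<le> j \<Longrightarrow> triangle i \<le> triangle j"
  by (induction j) (auto simp: le_Suc_eq)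

lemma triangle_ge: "n \<le> triangle n"
  by (induction n) auto

lemma sum_lt_indicator: "(\<Sum>i<z. if i < s then 1 else 0::nat) = min z s"
  by (induction z) auto

lemma pd_s_correct: "pd_s z = fst (prod_decode z) + snd (prod_decode z)"
proof -
  obtain a b where pd: "prod_decode z = (a, b)" by (cases "prod_decode z")
  have z: "z = triangle (a + b) + a"
    using prod_decode_inverse[of z] pd by (simp add: prod_encode_def)
  define s where "s = a + b"
  have iff: "triangle (Suc i) \<le> z \<longleftrightarrow> i < s" for i
  proof
    assume "i < s"
    then have "triangle (Suc i) \<le> triangle s" by (intro triangle_mono) simp
    then show "triangle (Suc i) \<le> z" using z s_def by simp
  next
    assume h: "triangle (Suc i) \<le> z"
    show "i < s"
    proof (rule ccontr)
      assume "\<not> i < s"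
      then have "triangle (Suc s) \<le> triangle (Suc i)" by (intro triangle_mono) simp
      then show False using h z s_def by simp
    qed
  qed
  have "s \<le> z" using z s_def triangle_ge[of s] by simp
  then have "pd_s z = s" unfolding pd_s_def iff sum_lt_indicator by simp
  then show ?thesis using pd s_def by simp
qed

lemma fst_dec_correct: "fst_dec z = fst (prod_decode z)"
proof -
  obtain a b where pd: "prod_decode z = (a, b)" by (cases "prod_decode z")
  have z: "z = triangle (a + b) + a"
    using prod_decode_inverse[of z] pd by (simp add: prod_encode_def)
  show ?thesis unfolding fst_dec_def pd_s_correct pd using z by simp
qed

lemma snd_dec_correct: "snd_dec z = snd (prod_decode z)"
  unfolding snd_dec_def fst_dec_correct pd_s_correct by simp

definition hdc :: "nat \<Rightarrow> nat" where "hdc x = fst_dec (x - 1)"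
definition tlc :: "nat \<Rightarrow> nat" where "tlc x = snd_dec (x - 1)"
definition tli :: "nat \<Rightarrow> nat \<Rightarrow> nat" where "tli x i = rec_nat x (\<lambda>_ acc. tlc acc) i"
definition nthc :: "nat \<Rightarrow> nat \<Rightarrow> nat" where "nthc x i = hdc (tli x i)"
definition lenc :: "nat \<Rightarrow> nat" where "lenc x = (\<Sum>j<x. if tli x j = 0 then 0 else 1)"
definition memc :: "nat \<Rightarrow> nat \<Rightarrow> bool" where
  "memc q x \<longleftrightarrow> 0 < (\<Sum>j<lenc x. if nthc x j = q then 1 else 0::nat)"

lemma rc_hdc: "rcomp k a \<Longrightarrow> rcomp k (\<lambda>xs. hdc (a xs))"
  unfolding hdc_def by (intro rc_fst_dec rc_pred)
lemma rc_tlc: "rcomp k a \<Longrightarrow> rcomp k (\<lambda>xs. tlc (a xs))"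
  unfolding tlc_def by (intro rc_snd_dec rc_pred)

lemma rc_tli: assumes a: "rcomp k a" and i: "rcomp k i" shows "rcomp k (\<lambda>xs. tli (a xs) (i xs))"
  by (rule rc_cong[OF rc_natrec[OF a rc_tlc[OF rc_proj1] i]]) (simp add: tli_def)

lemma rc_nthc: "rcomp k a \<Longrightarrow> rcomp k i \<Longrightarrow> rcomp k (\<lambda>xs. nthc (a xs) (i xs))"
  unfolding nthc_def by (intro rc_hdc rc_tli)

lemma rc_lenc: assumes a: "rcomp k a" shows "rcomp k (\<lambda>xs. lenc (a xs))"
proof (rule rc_lift1[OF _ a])
  have "rcomp 1 (\<lambda>xs. \<Sum>i<xs ! 0. (\<lambda>ys. if tli (ys ! 1) (ys ! 0) = 0 then 0 else 1) (i # xs))"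
    by (rule rc_sum[where g = "\<lambda>ys. if tli (ys ! 1) (ys ! 0) = 0 then 0 else 1"];
        intro rc_if rp_eq rc_tli rc_const rc_proj) simp_all
  then show "rcomp 1 (\<lambda>ys. lenc (ys ! 0))"
    by (rule rc_cong) (simp add: lenc_def)
qed

lemma rc_sum':
  assumes g: "rcomp (Suc k) g" and n: "rcomp k n" and eq: "\<And>xs i. length xs = k \<Longrightarrow> g (i # xs) = h i xs"
  shows "rcomp k (\<lambda>xs. \<Sum>i<n xs. h i xs)"
  by (rule rc_cong[OF rc_sum[OF g n]]) (simp add: eq)

lemma rp_memc: assumes a: "rcomp k a" and b: "rcomp k b" shows "rpred k (\<lambda>xs. memc (a xs) (b xs))"
  unfolding rpred_def
proof (rule rc_lift2[OF _ a b, where f = "\<lambda>q x. if memc q x then 1 else 0"])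
  have S: "rcomp 2 (\<lambda>xs. \<Sum>i<lenc (xs ! 1). if nthc (xs ! 1) i = xs ! 0 then 1 else 0)"
    by (rule rc_sum'[where g = "\<lambda>ys. if nthc (ys ! 2) (ys ! 0) = ys ! 1 then 1 else 0"];
        (intro rc_if rp_eq rc_nthc rc_lenc rc_const rc_proj)?) simp_all
  have "rcomp 2 (\<lambda>xs. if 0 < (\<Sum>i<lenc (xs ! 1). if nthc (xs ! 1) i = xs ! 0 then 1 else (0::nat)) then 1 else 0)"
    by (rule rp_lt[OF rc_const[of 2 0] S, unfolded rpred_def])
  then show "rcomp 2 (\<lambda>ys. if memc (ys ! 0) (ys ! 1) then 1 else 0)"
    by (rule rc_cong) (simp add: memc_def)
qed

lemma prod_decode_0: "prod_decode 0 = (0, 0)"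
  using prod_encode_inverse[of "(0,0)"] by (simp add: prod_encode_def)

lemma tlc_LE: "tlc (list_encode ys) = list_encode (tl ys)"
  by (cases ys) (auto simp: tlc_def snd_dec_correct prod_decode_0)

lemma hdc_LE: "hdc (Suc (prod_encode (y, z))) = y"
  by (simp add: hdc_def fst_dec_correct)

lemma tli_LE: "tli (list_encode xs) i = list_encode (drop i xs)"
  by (induction i) (auto simp: tli_def tlc_LE drop_Suc tl_drop)

lemma nthc_LE: "i < length xs \<Longrightarrow> nthc (list_encode xs) i = xs ! i"
  by (simp add: nthc_def tli_LE Cons_nth_drop_Suc[symmetric] hdc_LE)

lemma LE_eq0: "list_encode xs = 0 \<longleftrightarrow> xs = []"
  by (cases xs) auto

lemma length_le_LE: "length xs \<le> list_encode xs"
proof (induction xs)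
  case (Cons x xs)
  then show ?case using le_prod_encode_2[of "list_encode xs" x] by simp
qed simp

lemma lenc_LE: "lenc (list_encode xs) = length xs"
proof -
  have "(if tli (list_encode xs) j = 0 then 0 else 1) = (if j < length xs then 1 else 0::nat)" for j
    by (simp add: tli_LE LE_eq0)
  then show ?thesis unfolding lenc_def using sum_lt_indicator length_le_LE[of xs]
    by (simp add: min_absorb2)
qed

lemma sum_ind_pos: "finite A \<Longrightarrow> (0 < (\<Sum>j\<in>A. if P j then 1 else 0::nat)) \<longleftrightarrow> (\<exists>j\<in>A. P j)"
proof
  assume "finite A" "0 < (\<Sum>j\<in>A. if P j then 1 else 0::nat)"
  then show "\<exists>j\<in>A. P j"
  proof (rule_tac ccontr)
    assume "\<not> (\<exists>j\<in>A. P j)"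
    then have "(\<Sum>j\<in>A. if P j then 1 else 0::nat) = 0" by (intro sum.neutral) auto
    then show False using \<open>0 < (\<Sum>j\<in>A. if P j then 1 else 0::nat)\<close> by simp
  qed
next
  assume A: "finite A" and "\<exists>j\<in>A. P j"
  then obtain j where j: "j \<in> A" "P j" by blast
  have "(if P j then 1 else 0::nat) \<le> (\<Sum>j\<in>A. if P j then 1 else 0::nat)"
    by (rule member_le_sum[OF j(1)]) (use A in auto)
  then show "0 < (\<Sum>j\<in>A. if P j then 1 else 0::nat)" using j by simp
qed

lemma memc_LE: "memc q (list_encode xs) \<longleftrightarrow> q \<in> set xs"
proof -
  have "memc q (list_encode xs) \<longleftrightarrow> (\<exists>j<length xs. xs ! j = q)"
    unfolding memc_def lenc_LE by (auto simp: nthc_LE sum_ind_pos)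
  then show ?thesis by (auto simp: in_set_conv_nth)
qed

definition divc :: "nat \<Rightarrow> nat \<Rightarrow> nat" where
  "divc a b = (if b = 0 then 0 else \<Sum>i<a. if Suc i * b \<le> a then 1 else 0)"
definition modc :: "nat \<Rightarrow> nat \<Rightarrow> nat" where "modc a b = a - b * divc a b"

lemma divc_correct: "divc a b = a div b"
proof (cases "b = 0")
  case False
  then have "(if Suc i * b \<le> a then 1 else 0) = (if i < a div b then 1 else 0::nat)" for i
    using less_eq_div_iff_mult_less_eq[of b "Suc i" a] by (simp add: Suc_le_eq)
  then show ?thesis unfolding divc_def using False sum_lt_indicator div_le_dividend[of a b]
    by (simp add: min_absorb2)
qed (simp add: divc_def)

lemma modc_correct: "modc a b = a mod b"
  by (simp add: modc_def divc_correct minus_div_mult_eq_mod[symmetric] mult.commute)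

lemma rc_divc: assumes a: "rcomp k a" and b: "rcomp k b" shows "rcomp k (\<lambda>xs. divc (a xs) (b xs))"
proof (rule rc_lift2[OF _ a b])
  have "rcomp 2 (\<lambda>xs. if xs ! 1 = 0 then 0 else \<Sum>i<xs ! 0. if Suc i * xs ! 1 \<le> xs ! 0 then 1 else 0)"
    by (intro rc_if rp_eq rc_const rc_proj;
        (rule rc_sum'[where g = "\<lambda>ys. if Suc (ys ! 0) * ys ! 2 \<le> ys ! 1 then 1 else 0"])?;
        (intro rc_if rp_le rc_mult rc_suc rc_const rc_proj)?) simp_all
  then show "rcomp 2 (\<lambda>ys. divc (ys ! 0) (ys ! 1))"
    by (rule rc_cong) (simp add: divc_def)
qed

lemma rc_modc: "rcomp k a \<Longrightarrow> rcomp k b \<Longrightarrow> rcomp k (\<lambda>xs. modc (a xs) (b xs))"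
  unfolding modc_def by (intro rc_sub rc_mult rc_divc)

lemma build_eq:
  assumes "j \<le> L"
  shows "rec_nat 0 (\<lambda>j acc. Suc (prod_encode (g (L - Suc j), acc))) j
     = list_encode (map g [L - j..<L])"
  using assms
proof (induction j)
  case (Suc j)
  have "[L - Suc j..<L] = (L - Suc j) # [L - j..<L]"
    using Suc.prems by (simp add: upt_conv_Cons Suc_diff_Suc)
  then show ?case using Suc by simp
qed simp

lemma rc_build:
  assumes G: "rcomp (Suc k) G" and L: "rcomp k L"
  shows "rcomp k (\<lambda>xs. list_encode (map (\<lambda>i. G (i # xs)) [0..<L xs]))"
proof -
  have s: "rcomp (Suc (Suc k)) (\<lambda>ys. Suc (prod_encode (G ((L (drop 2 ys) - Suc (ys ! 0)) # drop 2 ys), ys ! 1)))"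
    by (intro rc_suc rc_penc rc_shiftG[OF G] rc_sub rc_drop2[OF L] rc_proj) simp_all
  show ?thesis
    by (rule rc_cong[OF rc_natrec[OF rc_zero s L]])
       (simp add: build_eq[where g = "\<lambda>i. G (i # _)", simplified])
qed



definition WG :: "nat \<Rightarrow> nat \<Rightarrow> (nat \<Rightarrow> bool) \<Rightarrow> nat \<Rightarrow> nat \<Rightarrow> (nat \<Rightarrow> nat \<Rightarrow> nat \<Rightarrow> 'v) \<Rightarrow> 'v \<Rightarrow> 'v \<Rightarrow> 'v
   \<Rightarrow> nat \<Rightarrow> nat \<Rightarrow> nat \<Rightarrow> 'v" where
"WG n k isF s s' M c0 c1 ch a p t =
 (if p = 0 then (if a = Suc k then (if t = 4 + s \<or> t = 4 + n + s' then ch else c0) else (if t = 2 then c1 else c0))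
  else if p = 1 then (if t = 1 then c1 else c0)
  else if p = 2 then (if t = 2 then c1 else c0)
  else if p = 3 \<or> 4 + 2 * n \<le> p then
    (if a < k then (if t = p then c1 else c0) else if a = k then (if t = 0 then c1 else c0) else (if t = 2 then c1 else c0))
  else if a < k then
     (if isF (if 4 + n \<le> p then p - (4 + n) else p - 4) then (if t = 3 then c1 else c0)
      else if p < 4 + n \<and> 4 \<le> t \<and> t < 4 + n then M a (p - 4) (t - 4)
      else if 4 + n \<le> p \<and> 4 + n \<le> t \<and> t < 4 + 2 * n then M a (p - (4 + n)) (t - (4 + n))
      else if 4 + 2 * n \<le> t \<and> t < 4 + 2 * n + k * n \<and> (t - (4 + 2 * n)) div n \<noteq> a
        then M ((t - (4 + 2 * n)) div n) (if 4 + n \<le> p then p - (4 + n) else p - 4) ((t - (4 + 2 * n)) mod n)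
      else c0)
  else if a = k then
     (if isF (if 4 + n \<le> p then p - (4 + n) else p - 4) then (if t = (if 4 + n \<le> p then 2 else 1) then c1 else c0)
      else (if t = 0 then c1 else c0))
  else (if t = 2 then c1 else c0))"

lemma WG_map: "f (WG n k isF s s' M c0 c1 ch a p t) = WG n k isF s s' (\<lambda>b q t. f (M b q t)) (f c0) (f c1) (f ch) a p t"
  unfolding WG_def by (simp only: if_distrib[of f])

lemma WG_cong:
  assumes "\<And>b q t. b < k \<Longrightarrow> q < n \<Longrightarrow> t < n \<Longrightarrow> M1 b q t = M2 b q t"
  shows "WG n k isF s s' M1 c0 c1 ch a p t = WG n k isF s s' M2 c0 c1 ch a p t"
proof -
  have d: "(t - (4 + 2 * n)) div n < k" "(t - (4 + 2 * n)) mod n < n"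
    if "4 + 2 * n \<le> t" "t < 4 + 2 * n + k * n" 
  proof -
    have n0: "0 < n" using that by (cases "n = 0") auto
    show "(t - (4 + 2 * n)) mod n < n" using n0 by simp
    show "(t - (4 + 2 * n)) div n < k" using that n0
      by (simp add: div_less_iff_less_mult mult.commute)
  qed
  show ?thesis unfolding WG_def using assms d
    by (auto simp del: One_nat_def)
qed

lemma sum_add_split: "(\<Sum>i<m + (l::nat). f i) = (\<Sum>i<m. f i) + (\<Sum>i<l. f (m + i))"
  by (induction l) (auto simp: add.assoc)

lemma sum_mult_split: "(\<Sum>i<(c::nat) * d. f i) = (\<Sum>b<c. \<Sum>t<d. f (b * d + t))"
proof (induction c)
  case (Suc c)
  have "(\<Sum>i<Suc c * d. f i) = (\<Sum>i<c * d + d. f i)" by (simp add: add.commute)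
  also have "\<dots> = (\<Sum>i<c * d. f i) + (\<Sum>t<d. f (c * d + t))" by (rule sum_add_split)
  finally show ?case using Suc by simp
qed simp

lemma sum_delta1: "c < (L::nat) \<Longrightarrow> (\<Sum>t<L. (if t = c then 1 else 0) * (f t :: rat)) = f c"
proof -
  assume "c < L"
  have "(\<Sum>t<L. (if t = c then 1 else 0) * f t) = (\<Sum>t<L. if t = c then f t else 0)"
    by (intro sum.cong) auto
  also have "\<dots> = (if c \<in> {..<L} then f c else 0)" by (rule sum.delta[OF finite_lessThan])
  finally show ?thesis using \<open>c < L\<close> by simp
qed

lemma if_pred: "Q x \<Longrightarrow> Q y \<Longrightarrow> Q (if c then x else y)" by simp

lemma WG_pred:
  assumes "Q c0" "Q c1" "Q ch" "\<And>b q t. Q (M b q t)"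
  shows "Q (WG n k isF s s' M c0 c1 ch a p t)"
  unfolding WG_def by (intro if_pred[where Q = Q] assms)

locale red =
  fixes A :: wa and s s' :: nat
  assumes lmc: "is_LMC A" and s_lt: "s < states A" and s'_lt: "s' < states A"
begin

abbreviation "n \<equiv> states A"
abbreviation "k \<equiv> nletters A"
abbreviation "M \<equiv> wt A"
abbreviation "F \<equiv> finals A"
definition "W = WG n k (\<lambda>q. q \<in> F) s s' M (0::rat) 1 (1/2)"
definition "N = 4 + 2 * n + k * n"
definition "P = (N, map (\<lambda>a. map (\<lambda>p. map (\<lambda>t. W a p t) [0..<N]) [0..<N]) [0..<k + 2], [1::nat])"

lemma wf: "well_formed A" using lmc unfolding is_LMC_def by blast

lemma M_nonneg: "a < k \<Longrightarrow> q < n \<Longrightarrow> t < n \<Longrightarrow> 0 \<le> M a q t"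
  using wf unfolding well_formed_def wt_def nletters_def
  by (metis nth_mem)

lemma M_final: "q < n \<Longrightarrow> q \<in> F \<Longrightarrow> t < n \<Longrightarrow> a < k \<Longrightarrow> M a q t = 0"
  using lmc unfolding is_LMC_def by blast

lemma M_rowsum: "q < n \<Longrightarrow> q \<notin> F \<Longrightarrow> (\<Sum>b<k. \<Sum>t<n. M b q t) = 1"
  using lmc unfolding is_LMC_def by (simp add: sum.swap[of _ "{..<k}"])

lemma F_sub: "F \<subseteq> {0..<n}" using wf unfolding well_formed_def by blast

lemma P_states: "states P = N" by (simp add: P_def states_def)
lemma P_nletters: "nletters P = k + 2" by (simp add: P_def nletters_def)
lemma P_wt: "a < k + 2 \<Longrightarrow> p < N \<Longrightarrow> t < N \<Longrightarrow> wt P a p t = W a p t"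
  by (simp add: P_def wt_def del: upt_Suc)
lemma P_finals[simp]: "finals P = {1}" by (simp add: P_def finals_def)

lemma W_0: "W a 0 t = (if a = Suc k then (if t = 4 + s \<or> t = 4 + n + s' then 1/2 else 0) else (if t = 2 then 1 else 0))"
  by (simp add: W_def WG_def)
lemma W_1: "W a 1 t = (if t = 1 then 1 else 0)"
  by (simp add: W_def WG_def)
lemma W_2: "W a 2 t = (if t = 2 then 1 else 0)"
  by (simp add: W_def WG_def)
lemma W_Z: "p = 3 \<or> 4 + 2 * n \<le> p \<Longrightarrow>
  W a p t = (if a < k then (if t = p then 1 else 0) else if a = k then (if t = 0 then 1 else 0) else (if t = 2 then 1 else 0))"
  by (auto simp add: W_def WG_def)

lemma W_LF: "q < n \<Longrightarrow> q \<in> F \<Longrightarrow> e \<le> 1 \<Longrightarrow>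
  W a (4 + e * n + q) t = (if a < k then (if t = 3 then 1 else 0)
     else if a = k then (if t = (if e = 1 then 2 else 1) then 1 else 0) else (if t = 2 then 1 else 0))"
  by (cases e) (auto simp add: W_def WG_def)

lemma W_LnF_k: "q < n \<Longrightarrow> q \<notin> F \<Longrightarrow> e \<le> 1 \<Longrightarrow> k \<le> a \<Longrightarrow>
  W a (4 + e * n + q) t = (if a = k then (if t = 0 then 1 else 0) else (if t = 2 then 1 else 0))"
  by (cases e) (auto simp add: W_def WG_def)

lemma W_LnF_low: "q < n \<Longrightarrow> q \<notin> F \<Longrightarrow> e \<le> 1 \<Longrightarrow> a < k \<Longrightarrow> t < 4 \<Longrightarrow> W a (4 + e * n + q) t = 0"
  by (cases e) (auto simp add: W_def WG_def)

lemma W_LnF_blk: "q < n \<Longrightarrow> q \<notin> F \<Longrightarrow> e \<le> 1 \<Longrightarrow> e' \<le> 1 \<Longrightarrow> a < k \<Longrightarrow> t < n \<Longrightarrow>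
   W a (4 + e * n + q) (4 + e' * n + t) = (if e = e' then M a q t else 0)"
  by (cases e; cases e') (auto simp add: W_def WG_def)

lemma W_LnF_Z: "q < n \<Longrightarrow> q \<notin> F \<Longrightarrow> e \<le> 1 \<Longrightarrow> a < k \<Longrightarrow> b < k \<Longrightarrow> t < n \<Longrightarrow>
   W a (4 + e * n + q) (4 + 2 * n + b * n + t) = (if b \<noteq> a then M b q t else 0)"
proof -
  assume h: "q < n" "q \<notin> F" "e \<le> 1" "a < k" "b < k" "t < n"
  have dm: "(b * n + t) div n = b" "(b * n + t) mod n = t" using h by auto
  have lt: "b * n + t < k * n"
  proof -
    have "b * n + t < Suc b * n" using h by simp
    also have "\<dots> \<le> k * n" using h by (intro mult_right_mono) auto
    finally show ?thesis .
  qed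
  show ?thesis using h dm lt by (cases e) (auto simp add: W_def WG_def)
qed


lemma sumN: "(\<Sum>t<N. f t) = f 0 + f 1 + f 2 + f 3 + (\<Sum>t<n. f (4 + t)) + (\<Sum>t<n. f (4 + n + t))
   + (\<Sum>b<k. \<Sum>t<n. f (4 + 2 * n + b * n + t))"
proof -
  have "N = 4 + n + n + k * n" unfolding N_def by simp
  then have "(\<Sum>t<N. f t) = (\<Sum>t<4 + n + n. f t) + (\<Sum>i<k * n. f (4 + n + n + i))"
    by (simp only: sum_add_split)
  also have "(\<Sum>t<4 + n + n. f t) = (\<Sum>t<4 + n. f t) + (\<Sum>t<n. f (4 + n + t))"
    by (simp only: sum_add_split)
  also have "(\<Sum>t<4 + n. f t) = (\<Sum>t<4. f t) + (\<Sum>t<n. f (4 + t))"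
    by (simp only: sum_add_split)
  also have "(\<Sum>t<4. f t) = f 0 + f 1 + f 2 + f 3"
    by (simp add: numeral_eq_Suc)
  also have "(\<Sum>i<k * n. f (4 + n + n + i)) = (\<Sum>b<k. \<Sum>t<n. f (4 + 2 * n + b * n + t))"
    by (simp only: sum_mult_split) (simp add: algebra_simps)
  finally show ?thesis by simp
qed

lemma N_gt: "4 + 2 * n \<le> N" unfolding N_def by simp

definition wP :: "nat list \<Rightarrow> bool" where "wP u \<longleftrightarrow> (\<forall>a\<in>set u. a < k + 2)"

lemma wP_Cons[simp]: "wP (a # u) \<longleftrightarrow> a < k + 2 \<and> wP u" by (simp add: wP_def)
lemma wP_app[simp]: "wP (u @ v) \<longleftrightarrow> wP u \<and> wP v" by (auto simp add: wP_def)
lemma wP_Nil[simp]: "wP []" by (simp add: wP_def)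

lemma nuP_Cons: "a < k + 2 \<Longrightarrow> p < N \<Longrightarrow> nu P p (a # v) = (\<Sum>t<N. W a p t * nu P t v)"
  by (simp add: P_states P_wt)

lemma nuP_Nil: "nu P p [] = (if p = 1 then 1 else 0)"
  by (simp add: P_finals)

lemma nu_top: "wP v \<Longrightarrow> nu P 1 v = 1"
proof (induction v)
  case (Cons a v)
  have "nu P 1 (a # v) = (\<Sum>t<N. W a 1 t * nu P t v)"
    using Cons N_gt by (intro nuP_Cons) auto
  also have "\<dots> = (\<Sum>t<N. (if t = 1 then 1 else 0) * nu P t v)"
    by (simp only: W_1)
  also have "\<dots> = nu P 1 v" using N_gt by (intro sum_delta1) simp
  finally show ?case using Cons by simp
qed (simp add: nuP_Nil)

lemma nu_bot: "wP v \<Longrightarrow> nu P 2 v = 0"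
proof (induction v)
  case (Cons a v)
  have "nu P 2 (a # v) = (\<Sum>t<N. W a 2 t * nu P t v)"
    using Cons N_gt by (intro nuP_Cons) auto
  also have "\<dots> = (\<Sum>t<N. (if t = 2 then 1 else 0) * nu P t v)"
    by (simp only: W_2)
  also have "\<dots> = nu P 2 v" using N_gt by (intro sum_delta1) simp
  finally show ?case using Cons by simp
qed (simp add: nuP_Nil)

lemma nu_r_low: "a \<le> k \<Longrightarrow> wP u \<Longrightarrow> nu P 0 (a # u) = 0"
proof -
  assume h: "a \<le> k" "wP u"
  have "nu P 0 (a # u) = (\<Sum>t<N. W a 0 t * nu P t u)"
    using h N_gt by (intro nuP_Cons) auto
  also have "\<dots> = (\<Sum>t<N. (if t = 2 then 1 else 0) * nu P t u)"
    using h by (simp add: W_0)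
  also have "\<dots> = nu P 2 u" using N_gt by (intro sum_delta1) simp
  finally show ?thesis using h nu_bot by simp
qed

lemma nu_r_sig: "nu P 0 (Suc k # u) = 1/2 * nu P (4 + s) u + 1/2 * nu P (4 + n + s') u"
proof -
  have lt: "4 + s < N" "4 + n + s' < N" using s_lt s'_lt N_gt by auto
  have "nu P 0 (Suc k # u) = (\<Sum>t<N. ((if t = 4 + s then 1 else 0) * (1/2 * nu P t u))
      + ((if t = 4 + n + s' then 1 else 0) * (1/2 * nu P t u)))"
    using N_gt s_lt by (intro trans[OF nuP_Cons sum.cong]) (auto simp: W_0)
  also have "\<dots> = 1/2 * nu P (4 + s) u + 1/2 * nu P (4 + n + s') u"
    using lt by (simp only: sum.distrib sum_delta1)
  finally show ?thesis .
qed

definition isZ :: "nat \<Rightarrow> bool" where "isZ z \<longleftrightarrow> z = 3 \<or> (4 + 2 * n \<le> z \<and> z < N)"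

lemma isZ_lt: "isZ z \<Longrightarrow> z < N" using N_gt unfolding isZ_def by auto

lemma nu_Z_letters: "isZ z \<Longrightarrow> \<forall>a\<in>set w. a < k \<Longrightarrow> nu P z (w @ u) = nu P z u"
proof (induction w)
  case (Cons a w)
  have z: "z = 3 \<or> 4 + 2 * n \<le> z" using Cons.prems unfolding isZ_def by auto
  have "nu P z (a # w @ u) = (\<Sum>t<N. W a z t * nu P t (w @ u))"
    using Cons.prems isZ_lt[OF Cons.prems(1)] by (intro nuP_Cons) auto
  also have "\<dots> = (\<Sum>t<N. (if t = z then 1 else 0) * nu P t (w @ u))"
    using Cons.prems by (simp add: W_Z[OF z])
  also have "\<dots> = nu P z (w @ u)" using isZ_lt[OF Cons.prems(1)] by (intro sum_delta1)
  finally show ?case using Cons by simp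
qed simp

lemma nu_Z_k: "isZ z \<Longrightarrow> nu P z (k # u) = nu P 0 u"
proof -
  assume h: "isZ z"
  have z: "z = 3 \<or> 4 + 2 * n \<le> z" using h unfolding isZ_def by auto
  have "nu P z (k # u) = (\<Sum>t<N. W k z t * nu P t u)"
    using isZ_lt[OF h] by (intro nuP_Cons) auto
  also have "\<dots> = (\<Sum>t<N. (if t = 0 then 1 else 0) * nu P t u)"
    by (simp add: W_Z[OF z])
  also have "\<dots> = nu P 0 u" using N_gt by (intro sum_delta1) simp
  finally show ?thesis .
qed

lemma nu_Z_sig: "isZ z \<Longrightarrow> wP u \<Longrightarrow> nu P z (Suc k # u) = 0"
proof -
  assume h: "isZ z" "wP u"
  have z: "z = 3 \<or> 4 + 2 * n \<le> z" using h unfolding isZ_def by auto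
  have "nu P z (Suc k # u) = (\<Sum>t<N. W (Suc k) z t * nu P t u)"
    using isZ_lt[OF h(1)] by (intro nuP_Cons) auto
  also have "\<dots> = (\<Sum>t<N. (if t = 2 then 1 else 0) * nu P t u)"
    by (simp add: W_Z[OF z])
  also have "\<dots> = nu P 2 u" using N_gt by (intro sum_delta1) simp
  finally show ?thesis using nu_bot h by simp
qed

lemma nu_Z_Nil: "isZ z \<Longrightarrow> nu P z [] = 0"
  unfolding isZ_def by (auto simp: nuP_Nil)

lemma nuA_bounds: "q < n \<Longrightarrow> \<forall>a\<in>set w. a < k \<Longrightarrow> 0 \<le> nu A q w \<and> nu A q w \<le> 1"
proof (induction w arbitrary: q)
  case Nil
  then show ?case by simp
next
  case (Cons a w)
  have a: "a < k" using Cons.prems by simp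
  have nn: "0 \<le> nu A q (a # w)"
    using Cons a M_nonneg by (auto intro!: sum_nonneg mult_nonneg_nonneg)
  have "nu A q (a # w) \<le> (\<Sum>t<n. M a q t)"
    using Cons a M_nonneg by (auto intro!: sum_mono mult_left_le)
  also have "\<dots> \<le> 1"
  proof (cases "q \<in> F")
    case True
    then show ?thesis using M_final Cons.prems a by simp
  next
    case False
    have "(\<Sum>t<n. M a q t) \<le> (\<Sum>b<k. \<Sum>t<n. M b q t)"
      using a Cons.prems M_nonneg
      by (intro member_le_sum[where f = "\<lambda>b. \<Sum>t<n. M b q t"] sum_nonneg) auto
    then show ?thesis using M_rowsum[OF Cons.prems(1) False] by simp
  qed
  finally show ?case using nn by simp
qed


lemma alg:
  fixes m x :: "nat \<Rightarrow> rat" and Z al be :: rat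
  assumes "(\<Sum>t<L. m t) + Z = 1"
  shows "(\<Sum>t<L. m t * (x t * al + (1 - x t) * be)) + Z * be
     = (\<Sum>t<L. m t * x t) * al + (1 - (\<Sum>t<L. m t * x t)) * be"
proof -
  have "(\<Sum>t<L. m t * (x t * al + (1 - x t) * be))
      = (\<Sum>t<L. (m t * x t) * al + m t * be - (m t * x t) * be)"
    by (intro sum.cong) (auto simp: algebra_simps)
  also have "\<dots> = (\<Sum>t<L. m t * x t) * al + (\<Sum>t<L. m t) * be - (\<Sum>t<L. m t * x t) * be"
    by (simp add: sum.distrib sum_subtractf sum_distrib_right)
  finally have e: "(\<Sum>t<L. m t * (x t * al + (1 - x t) * be))
     = (\<Sum>t<L. m t * x t) * al + (\<Sum>t<L. m t) * be - (\<Sum>t<L. m t * x t) * be" .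
  have Z: "Z = 1 - (\<Sum>t<L. m t)" using assms by simp
  show ?thesis unfolding e Z by (simp add: algebra_simps)
qed

lemma rowsplit: "q < n \<Longrightarrow> q \<notin> F \<Longrightarrow> a < k \<Longrightarrow>
  (\<Sum>t<n. M a q t) + (\<Sum>b<k. \<Sum>t<n. if b \<noteq> a then M b q t else 0) = 1"
proof -
  assume h: "q < n" "q \<notin> F" "a < k"
  have "(\<Sum>b<k. \<Sum>t<n. M b q t) = (\<Sum>b<k. (if b = a then \<Sum>t<n. M b q t else 0) + (\<Sum>t<n. if b \<noteq> a then M b q t else 0))"
    by (intro sum.cong) auto
  also have "\<dots> = (\<Sum>t<n. M a q t) + (\<Sum>b<k. \<Sum>t<n. if b \<noteq> a then M b q t else 0)"
    using h by (simp add: sum.distrib)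
  finally show ?thesis using M_rowsum[OF h(1,2)] by simp
qed

lemma Zidx: "b < k \<Longrightarrow> t < n \<Longrightarrow> isZ (4 + 2 * n + b * n + t)"
proof -
  assume h: "b < k" "t < n"
  have "b * n + t < Suc b * n" using h by simp
  also have "\<dots> \<le> k * n" using h by (intro mult_right_mono) auto
  finally show ?thesis unfolding isZ_def N_def by simp
qed

lemma LR_lt: "e \<le> 1 \<Longrightarrow> q < n \<Longrightarrow> 4 + e * n + q < N"
proof -
  assume "e \<le> 1" "q < n"
  then have "e * n \<le> n" by (cases e) auto
  then show ?thesis using \<open>q < n\<close> unfolding N_def by linarith
qed

lemma main:
  assumes HLR: "\<And>e t. e \<le> 1 \<Longrightarrow> t < n \<Longrightarrow> nu P (4 + e * n + t) u = (if t \<in> F then al e else be)"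
    and HZ: "\<And>z. isZ z \<Longrightarrow> nu P z u = be"
  shows "\<forall>a\<in>set w. a < k \<Longrightarrow> q < n \<Longrightarrow> e \<le> 1 \<Longrightarrow>
     nu P (4 + e * n + q) (w @ u) = nu A q w * al e + (1 - nu A q w) * be"
proof (induction w arbitrary: q)
  case Nil
  then show ?case using HLR[of e q] by simp
next
  case (Cons a w)
  have a: "a < k" and w: "\<forall>a\<in>set w. a < k" using Cons.prems by auto
  have q: "q < n" and e: "e \<le> 1" using Cons.prems by auto
  have pN: "4 + e * n + q < N" using LR_lt[OF e q] .
  have HZw: "nu P z (w @ u) = be" if "isZ z" for z using nu_Z_letters[OF that w] HZ[OF that] by simp
  have start: "nu P (4 + e * n + q) (a # w @ u) = (\<Sum>t<N. W a (4 + e * n + q) t * nu P t (w @ u))"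
    using a pN by (intro nuP_Cons) auto
  show ?case
  proof (cases "q \<in> F")
    case True
    have "(\<Sum>t<N. W a (4 + e * n + q) t * nu P t (w @ u)) = (\<Sum>t<N. (if t = 3 then 1 else 0) * nu P t (w @ u))"
      using W_LF[OF q True e] a by simp
    also have "\<dots> = nu P 3 (w @ u)" using N_gt by (intro sum_delta1) simp
    also have "\<dots> = be" using HZw[of 3] by (simp add: isZ_def)
    finally have l: "nu P (4 + e * n + q) (a # w @ u) = be" using start by simp
    have "nu A q (a # w) = 0" using M_final[OF q True _ a] by simp
    then show ?thesis using l by simp
  next
    case False
    define f where "f t = W a (4 + e * n + q) t * nu P t (w @ u)" for t
    have low: "f t = 0" if "t < 4" for t
      unfolding f_def using W_LnF_low[OF q False e a that] by simp
    have blkL: "f (4 + t) = (if e = 0 then M a q t else 0) * nu P (4 + t) (w @ u)" if "t < n" for t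
      unfolding f_def using W_LnF_blk[OF q False e _ a that, of 0] by simp
    have blkR: "f (4 + n + t) = (if e = 1 then M a q t else 0) * nu P (4 + n + t) (w @ u)" if "t < n" for t
      unfolding f_def using W_LnF_blk[OF q False e _ a that, of 1] by simp
    have LR: "(\<Sum>t<n. f (4 + t)) + (\<Sum>t<n. f (4 + n + t)) = (\<Sum>t<n. M a q t * nu P (4 + e * n + t) (w @ u))"
    proof -
      have "(\<Sum>t<n. f (4 + t)) + (\<Sum>t<n. f (4 + n + t)) =
         (\<Sum>t<n. (if e = 0 then M a q t else 0) * nu P (4 + t) (w @ u)) +
         (\<Sum>t<n. (if e = 1 then M a q t else 0) * nu P (4 + n + t) (w @ u))"
        using blkL blkR by simp
      then show ?thesis using e by (cases e) auto
    qed
    have blkZ: "f (4 + 2 * n + b * n + t) = (if b \<noteq> a then M b q t else 0) * be" if "b < k" "t < n" for b t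
      unfolding f_def using W_LnF_Z[OF q False e a that] HZw[OF Zidx[OF that]] by simp
    have "(\<Sum>t<N. f t) = (\<Sum>t<n. M a q t * nu P (4 + e * n + t) (w @ u))
        + (\<Sum>b<k. \<Sum>t<n. if b \<noteq> a then M b q t else 0) * be"
      unfolding sumN using low LR blkZ by (simp add: sum_distrib_right)
    also have "\<dots> = (\<Sum>t<n. M a q t * (nu A t w * al e + (1 - nu A t w) * be))
        + (\<Sum>b<k. \<Sum>t<n. if b \<noteq> a then M b q t else 0) * be"
      using Cons.IH[OF w _ e] by simp
    also have "\<dots> = (\<Sum>t<n. M a q t * nu A t w) * al e + (1 - (\<Sum>t<n. M a q t * nu A t w)) * be"
      by (rule alg[OF rowsplit[OF q False a]])
    finally show ?thesis using start f_def by simp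
  qed
qed

lemma HLR_k: "wP u \<Longrightarrow> e \<le> 1 \<Longrightarrow> t < n \<Longrightarrow>
  nu P (4 + e * n + t) (k # u) = (if t \<in> F then (if e = 0 then 1 else 0) else nu P 0 u)"
proof -
  assume h: "wP u" "e \<le> 1" "t < n"
  have "nu P (4 + e * n + t) (k # u) = (\<Sum>t'<N. W k (4 + e * n + t) t' * nu P t' u)"
    using LR_lt[OF h(2,3)] by (intro nuP_Cons) auto
  also have "\<dots> = (if t \<in> F then (if e = 0 then 1 else 0) else nu P 0 u)"
  proof (cases "t \<in> F")
    case True
    have "(\<Sum>t'<N. W k (4 + e * n + t) t' * nu P t' u)
       = (\<Sum>t'<N. (if t' = (if e = 1 then 2 else 1) then 1 else 0) * nu P t' u)"
      using W_LF[OF h(3) True h(2)] by simp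
    also have "\<dots> = nu P (if e = 1 then 2 else 1) u" using N_gt by (intro sum_delta1) simp
    finally show ?thesis using True h nu_top nu_bot by auto
  next
    case False
    have "(\<Sum>t'<N. W k (4 + e * n + t) t' * nu P t' u)
       = (\<Sum>t'<N. (if t' = 0 then 1 else 0) * nu P t' u)"
      using W_LnF_k[OF h(3) False h(2)] by simp
    also have "\<dots> = nu P 0 u" using N_gt by (intro sum_delta1) simp
    finally show ?thesis using False by simp
  qed
  finally show ?thesis .
qed

lemma HLR_sig: "wP u \<Longrightarrow> e \<le> 1 \<Longrightarrow> t < n \<Longrightarrow> nu P (4 + e * n + t) (Suc k # u) = 0"
proof -
  assume h: "wP u" "e \<le> 1" "t < n"
  have "nu P (4 + e * n + t) (Suc k # u) = (\<Sum>t'<N. W (Suc k) (4 + e * n + t) t' * nu P t' u)"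
    using LR_lt[OF h(2,3)] by (intro nuP_Cons) auto
  also have "\<dots> = (\<Sum>t'<N. (if t' = 2 then 1 else 0) * nu P t' u)"
    using W_LF[OF h(3) _ h(2)] W_LnF_k[OF h(3) _ h(2)] by (cases "t \<in> F") auto
  also have "\<dots> = nu P 2 u" using N_gt by (intro sum_delta1) simp
  finally show ?thesis using nu_bot h by simp
qed

lemma blk: "\<forall>a\<in>set w. a < k \<Longrightarrow> wP u \<Longrightarrow>
  nu P 0 (Suc k # w @ k # u) = 1/2 * (nu A s w + (1 - nu A s w) * nu P 0 u) + 1/2 * ((1 - nu A s' w) * nu P 0 u)"
proof -
  assume w: "\<forall>a\<in>set w. a < k" and u: "wP u"
  let ?al = "\<lambda>e. if e = 0 then 1 else 0 :: rat"
  have m: "nu P (4 + e * n + q) (w @ k # u) = nu A q w * ?al e + (1 - nu A q w) * nu P 0 u"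
    if "q < n" "e \<le> 1" for q e
    by (rule main[where u = "k # u", OF _ _ w that]) (use HLR_k[OF u] nu_Z_k in auto)
  show ?thesis using nu_r_sig m[OF s_lt, of 0] m[OF s'_lt, of 1] by simp
qed

lemma blk_nil: "\<forall>a\<in>set w. a < k \<Longrightarrow> nu P 0 (Suc k # w) = 0"
proof -
  assume w: "\<forall>a\<in>set w. a < k"
  have m: "nu P (4 + e * n + q) (w @ []) = nu A q w * 0 + (1 - nu A q w) * 0"
    if "q < n" "e \<le> 1" for q e
    by (rule main[where u = "[]" and al = "\<lambda>_. 0", OF _ _ w that]) (auto simp: nu_Z_Nil isZ_def)
  show ?thesis using nu_r_sig m[OF s_lt, of 0] m[OF s'_lt, of 1] by simp
qed

lemma blk_sig: "\<forall>a\<in>set w. a < k \<Longrightarrow> wP u \<Longrightarrow> nu P 0 (Suc k # w @ Suc k # u) = 0"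
proof -
  assume w: "\<forall>a\<in>set w. a < k" and u: "wP u"
  have m: "nu P (4 + e * n + q) (w @ Suc k # u) = nu A q w * 0 + (1 - nu A q w) * 0"
    if "q < n" "e \<le> 1" for q e
    by (rule main[where u = "Suc k # u" and al = "\<lambda>_. 0", OF _ _ w that]) (use HLR_sig[OF u] nu_Z_sig[OF _ u] in auto)
  show ?thesis using nu_r_sig m[OF s_lt, of 0] m[OF s'_lt, of 1] by simp
qed


lemma wordsA_iff: "w \<in> words A \<longleftrightarrow> (\<forall>a\<in>set w. a < k)"
  by (simp add: words_def)

lemma wordsP_iff: "v \<in> words P \<longleftrightarrow> wP v"
  by (simp add: words_def wP_def P_nletters)

lemma ineq_step:
  fixes a b X C :: real
  assumes "0 \<le> a" "a \<le> 1" "0 \<le> b" "b \<le> 1" "a \<le> C * b" "0 < C" "X \<le> C / (1 + C)"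
  shows "1/2 * (a + (1 - a) * X) + 1/2 * ((1 - b) * X) \<le> C / (1 + C)"
proof -
  define c where "c = C / (1 + C)"
  have e1: "1/2 * (a + (1 - a) * X) + 1/2 * ((1 - b) * X) = (a + X * (2 - (a + b))) / 2"
    by (simp add: field_simps)
  have h1: "X * (2 - (a + b)) \<le> c * (2 - (a + b))"
    using assms c_def by (intro mult_right_mono) auto
  have e2: "c * (2 - (a + b)) = 2 * c - c * (a + b)" by (simp add: algebra_simps)
  have h2: "a \<le> c * (a + b)"
  proof -
    have "a * (1 + C) \<le> C * (a + b)" using assms by (simp add: algebra_simps)
    then have "a \<le> C * (a + b) / (1 + C)" using assms by (simp add: pos_le_divide_eq)
    then show ?thesis by (simp add: c_def)
  qed
  have "a + X * (2 - (a + b)) \<le> 2 * c" using h1 h2 e2 by linarith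
  then show ?thesis unfolding e1 c_def by (simp add: mult.commute)
qed

lemma invariant:
  assumes C: "0 < C" and bnd: "\<forall>w\<in>words A. real_of_rat (nu A s w) \<le> C * real_of_rat (nu A s' w)"
  shows "wP v \<Longrightarrow> real_of_rat (nu P 0 v) \<le> C / (1 + C)"
proof (induction "length v" arbitrary: v rule: less_induct)
  case less
  have c0: "0 \<le> C / (1 + C)" using C by simp
  show ?case
  proof (cases v)
    case Nil
    then show ?thesis using c0 by simp
  next
    case (Cons a v')
    have v': "wP v'" and a2: "a < k + 2" using less.prems Cons by auto
    show ?thesis
    proof (cases "a \<le> k")
      case True
      then show ?thesis using nu_r_low[OF True v'] Cons c0 by simp
    next
      case False
      then have aSk: "a = Suc k" using a2 by simp
      define w where "w = takeWhile (\<lambda>x. x < k) v'"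
      define r where "r = dropWhile (\<lambda>x. x < k) v'"
      have vwr: "v' = w @ r" unfolding w_def r_def by simp
      have w: "\<forall>x\<in>set w. x < k" unfolding w_def by (meson set_takeWhileD)
      show ?thesis
      proof (cases r)
        case Nil
        then show ?thesis using blk_nil[OF w] Cons aSk vwr c0 by simp
      next
        case (Cons b u)
        have "\<not> b < k" using Cons unfolding r_def
          by (metis hd_dropWhile list.distinct(1) list.sel(1))
        moreover have "b < k + 2" "wP u" using v' vwr Cons by auto
        ultimately consider "b = k" | "b = Suc k" by linarith
        then show ?thesis
        proof cases
          case 1
          have len: "length u < length v" using \<open>v = a # v'\<close> vwr Cons by simp
          have IH: "real_of_rat (nu P 0 u) \<le> C / (1 + C)" using less.hyps[OF len \<open>wP u\<close>] .
          have eq: "nu P 0 v = 1/2 * (nu A s w + (1 - nu A s w) * nu P 0 u) + 1/2 * ((1 - nu A s' w) * nu P 0 u)"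
            using blk[OF w \<open>wP u\<close>] \<open>v = a # v'\<close> aSk vwr Cons 1 by simp
          have bA: "0 \<le> nu A s w" "nu A s w \<le> 1" "0 \<le> nu A s' w" "nu A s' w \<le> 1"
            using nuA_bounds[OF s_lt w] nuA_bounds[OF s'_lt w] by auto
          have wA: "w \<in> words A" using w wordsA_iff by blast
          have "real_of_rat (nu P 0 v) = 1/2 * (real_of_rat (nu A s w) + (1 - real_of_rat (nu A s w)) * real_of_rat (nu P 0 u))
              + 1/2 * ((1 - real_of_rat (nu A s' w)) * real_of_rat (nu P 0 u))"
            unfolding eq by (simp add: of_rat_add of_rat_mult of_rat_diff of_rat_divide)
          also have "\<dots> \<le> C / (1 + C)"
            by (rule ineq_step) (use bA bnd wA C IH in \<open>auto simp: zero_le_of_rat_iff of_rat_less_eq\<close>)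
          finally show ?thesis .
        next
          case 2
          then show ?thesis using blk_sig[OF w \<open>wP u\<close>] \<open>v = a # v'\<close> aSk vwr Cons c0 by simp
        qed
      qed
    qed
  qed
qed


lemma value_dir:
  assumes nb: "\<not> big_O A s s'"
  shows "value1 P 0"
  unfolding value1_def
proof (intro allI impI)
  fix \<delta> :: real assume d: "0 < \<delta>"
  define C where "C = 2 / \<delta>"
  have C0: "0 < C" using d by (simp add: C_def)
  obtain w where wA: "w \<in> words A" and nle: "\<not> real_of_rat (nu A s w) \<le> C * real_of_rat (nu A s' w)"
    using nb C0 unfolding big_O_def by blast
  have w: "\<forall>a\<in>set w. a < k" using wA wordsA_iff by blast
  define x where "x = real_of_rat (nu A s w)"
  define y where "y = real_of_rat (nu A s' w)"
  have bA: "0 \<le> x" "x \<le> 1" "0 \<le> y" "y \<le> 1"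
    using nuA_bounds[OF s_lt w] nuA_bounds[OF s'_lt w] unfolding x_def y_def
    by (auto simp: zero_le_of_rat_iff of_rat_less_eq)
  have xy: "C * y < x" using nle unfolding x_def y_def by simp
  have x0: "0 < x" using xy C0 bA by (smt (verit) mult_nonneg_nonneg)
  define \<rho> where "\<rho> = 1 - (x + y) / 2"
  define L where "L = x / (x + y)"
  define bw where "bw = Suc k # w @ [k]"
  define v where "v m = concat (replicate m bw)" for m
  have vP: "wP (v m)" for m
    using w unfolding v_def bw_def wP_def by auto
  have rec: "real_of_rat (nu P 0 (v (Suc m))) = x / 2 + \<rho> * real_of_rat (nu P 0 (v m))" for m
  proof -
    have "v (Suc m) = Suc k # w @ k # v m" unfolding v_def bw_def by simp
    then have "nu P 0 (v (Suc m)) = 1/2 * (nu A s w + (1 - nu A s w) * nu P 0 (v m)) + 1/2 * ((1 - nu A s' w) * nu P 0 (v m))"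
      using blk[OF w vP] by simp
    then have "real_of_rat (nu P 0 (v (Suc m))) = 1/2 * (x + (1 - x) * real_of_rat (nu P 0 (v m))) + 1/2 * ((1 - y) * real_of_rat (nu P 0 (v m)))"
      unfolding x_def y_def by (simp add: of_rat_add of_rat_mult of_rat_diff of_rat_divide)
    then show ?thesis unfolding \<rho>_def by (simp add: field_simps)
  qed
  have xyp: "0 < x + y" using x0 bA by simp
  have closed: "real_of_rat (nu P 0 (v m)) = L * (1 - \<rho> ^ m)" for m
  proof (induction m)
    case 0
    then show ?case by (simp add: v_def)
  next
    case (Suc m)
    have "x / 2 = L * (1 - \<rho>)" unfolding L_def \<rho>_def using xyp by (simp add: field_simps)
    then show ?case using rec[of m] Suc by (simp add: algebra_simps)
  qed
  have \<rho>1: "\<rho> < 1" and \<rho>0: "0 \<le> \<rho>" using xyp bA unfolding \<rho>_def by auto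
  obtain m where m: "\<rho> ^ m < \<delta> / 2" using real_arch_pow_inv[of "\<delta> / 2" \<rho>] d \<rho>1 by auto
  have L1: "L \<le> 1" and L0: "0 \<le> L" unfolding L_def using bA xyp by auto
  have Lgt: "1 - \<delta> / 2 < L"
  proof -
    have y1: "y < \<delta> * x / 2" using xy d unfolding C_def by (simp add: field_simps)
    have "y * (1 - \<delta> / 2) \<le> y" using bA d by (simp add: algebra_simps)
    then have "(1 - \<delta> / 2) * (x + y) < x" using y1 by (simp add: algebra_simps)
    then show ?thesis unfolding L_def using xyp by (simp add: pos_less_divide_eq)
  qed
  have "L * \<rho> ^ m \<le> 1 * \<rho> ^ m" using L1 \<rho>0 by (intro mult_right_mono) auto
  then have "1 - \<delta> < real_of_rat (nu P 0 (v m))" unfolding closed using Lgt m by (simp add: algebra_simps)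
  moreover have "v m \<in> words P" using vP wordsP_iff by blast
  ultimately show "\<exists>w\<in>words P. 1 - \<delta> < real_of_rat (nu P 0 w)" by blast
qed


lemma sum_delta2: "c < (L::nat) \<Longrightarrow> (\<Sum>t<L. (if t = c then 1 else 0 :: rat)) = 1"
  using sum_delta1[of c L "\<lambda>_. 1"] by simp

lemma W_nonneg: "0 \<le> W a p t"
proof -
  define M' where "M' b q t = (if b < k \<and> q < n \<and> t < n then M b q t else 0)" for b q t
  have "W a p t = WG n k (\<lambda>q. q \<in> F) s s' M' (0::rat) 1 (1/2) a p t"
    unfolding W_def by (rule WG_cong) (simp add: M'_def)
  moreover have "0 \<le> M' b q t" for b q t unfolding M'_def using M_nonneg by auto
  ultimately show ?thesis
    by (simp only:) (rule WG_pred[where Q = "\<lambda>x. 0 \<le> x"], auto)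
qed

lemma rowsum: "a < k + 2 \<Longrightarrow> p < N \<Longrightarrow> (\<Sum>t<N. W a p t) = 1"
proof -
  assume a: "a < k + 2" and p: "p < N"
  have N4: "4 + 2 * n \<le> N" by (rule N_gt)
  consider "p = 0" | "p = 1" | "p = 2" | "p = 3 \<or> 4 + 2 * n \<le> p" | "4 \<le> p \<and> p < 4 + 2 * n" by linarith
  then show ?thesis
  proof cases
    case 1
    show ?thesis
    proof (cases "a = Suc k")
      case True
      have lt: "4 + s < N" "4 + n + s' < N" using s_lt s'_lt N4 by auto
      have "(\<Sum>t<N. W a p t) = (\<Sum>t<N. (if t = 4 + s then 1 else 0) * (1/2) + (if t = 4 + n + s' then 1 else 0) * (1/2 :: rat))"
        using 1 True s_lt by (intro sum.cong) (auto simp: W_0)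
      also have "\<dots> = 1" using lt by (simp only: sum.distrib sum_delta1)
      finally show ?thesis .
    next
      case False
      then show ?thesis using 1 N4 sum_delta2[of 2 N] by (simp add: W_0)
    qed
  next
    case 2 then show ?thesis using N4 sum_delta2[of 1 N] by (simp only: W_1)
  next
    case 3 then show ?thesis using N4 sum_delta2[of 2 N] by (simp only: W_2)
  next
    case 4
    have "2 < N" using N4 by linarith
    then show ?thesis using N4 p sum_delta2[of 0 N] sum_delta2[of 2 N] sum_delta2[of p N]
      by (cases "a < k"; cases "a = k") (simp_all add: W_Z[OF 4])
  next
    case 5
    obtain e q where eq: "e \<le> 1" "q < n" "p = 4 + e * n + q"
    proof (cases "p < 4 + n")
      case True then show ?thesis using that[of 0 "p - 4"] 5 by auto
    next
      case False then show ?thesis using that[of 1 "p - (4 + n)"] 5 by auto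
    qed
    show ?thesis
    proof (cases "q \<in> F")
      case True
      have "3 < N" using N4 by linarith
      then show ?thesis unfolding eq(3) using W_LF[OF eq(2) True eq(1)] N4 a
          sum_delta2[of 3 N] sum_delta2[of 2 N] sum_delta2[of 1 N]
        by (cases "a < k"; cases "a = k"; cases "e = 1") simp_all
    next
      case False
      show ?thesis
      proof (cases "a < k")
        case False': False
        then show ?thesis unfolding eq(3) using W_LnF_k[OF eq(2) \<open>q \<notin> F\<close> eq(1)] N4 a
            sum_delta2[of 0 N] sum_delta2[of 2 N] by (cases "a = k") simp_all
      next
        case True
        note nF = \<open>q \<notin> F\<close>
        define f where "f t = W a (4 + e * n + q) t" for t
        have low: "f t = 0" if "t < 4" for t
          unfolding f_def using W_LnF_low[OF eq(2) nF eq(1) True that] by simp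
        have blkL: "f (4 + t) = (if e = 0 then M a q t else 0)" if "t < n" for t
          unfolding f_def using W_LnF_blk[OF eq(2) nF eq(1) _ True that, of 0] by simp
        have blkR: "f (4 + n + t) = (if e = 1 then M a q t else 0)" if "t < n" for t
          unfolding f_def using W_LnF_blk[OF eq(2) nF eq(1) _ True that, of 1] by simp
        have LR: "(\<Sum>t<n. f (4 + t)) + (\<Sum>t<n. f (4 + n + t)) = (\<Sum>t<n. M a q t)"
          using blkL blkR eq(1) by (cases e) auto
        have blkZ: "f (4 + 2 * n + b * n + t) = (if b \<noteq> a then M b q t else 0)" if "b < k" "t < n" for b t
          unfolding f_def using W_LnF_Z[OF eq(2) nF eq(1) True that] by simp
        have "(\<Sum>t<N. f t) = (\<Sum>t<n. M a q t) + (\<Sum>b<k. \<Sum>t<n. if b \<noteq> a then M b q t else 0)"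
          unfolding sumN using low LR blkZ by simp
        also have "\<dots> = 1" by (rule rowsplit[OF eq(2) nF True])
        finally show ?thesis unfolding f_def eq(3) .
      qed
    qed
  qed
qed

lemma P_is_PA: "is_PA P 0"
proof -
  have N4: "4 + 2 * n \<le> N" by (rule N_gt)
  have fP: "finals P \<subseteq> {0..<states P}" using N4 by (simp add: P_states)
  have wfP: "well_formed P"
    unfolding well_formed_def using fP N4 W_nonneg by (auto simp: P_def states_def)
  have rs: "\<forall>q<states P. \<forall>a<nletters P. (\<Sum>q'<states P. wt P a q q') = 1"
  proof (intro allI impI)
    fix q a assume q: "q < states P" and a: "a < nletters P"
    have "(\<Sum>q'<states P. wt P a q q') = (\<Sum>q'<N. W a q q')"
      using q a by (intro sum.cong) (auto simp: P_states P_nletters P_wt)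
    also have "\<dots> = 1" using q a by (intro rowsum) (auto simp: P_states P_nletters)
    finally show "(\<Sum>q'<states P. wt P a q q') = 1" .
  qed
  show ?thesis unfolding is_PA_def using wfP rs N4 by (simp add: P_states)
qed

end



lemma enc_rat_0: "enc_rat 0 = 1"
  by (simp add: enc_rat_def prod_encode_def int_encode_def sum_encode_def)
lemma enc_rat_1: "enc_rat 1 = 8"
  by (simp add: enc_rat_def prod_encode_def int_encode_def sum_encode_def numeral_eq_Suc)
lemma enc_rat_half: "enc_rat (1/2) = 12"
proof -
  have e: "(1/2 :: rat) = Fract 1 2" by (simp add: Fract_of_int_quotient)
  have "quotient_of (Fract 1 2) = (1, 2)"
    by (simp add: quotient_of_Fract normalize_def)
  then have "quotient_of (1/2 :: rat) = (1, 2)" unfolding e .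
  then show ?thesis
    by (simp add: enc_rat_def prod_encode_def int_encode_def sum_encode_def numeral_eq_Suc)
qed

definition "wa_c x = fst_dec x"
definition "s_c x = fst_dec (snd_dec x)"
definition "s'_c x = snd_dec (snd_dec x)"
definition "n_c x = fst_dec (wa_c x)"
definition "Mc_c x = fst_dec (snd_dec (wa_c x))"
definition "Fc_c x = snd_dec (snd_dec (wa_c x))"
definition "k_c x = lenc (Mc_c x)"
definition "Mcode x b q t = nthc (nthc (nthc (Mc_c x) b) q) t"
definition "Ecode x a p t = WG (n_c x) (k_c x) (\<lambda>q. memc q (Fc_c x)) (s_c x) (s'_c x) (Mcode x) 1 8 12 a p t"
definition "N_c x = 4 + 2 * n_c x + k_c x * n_c x"
definition "Fout x = prod_encode (prod_encode (N_c x, prod_encode (list_encode (map (\<lambda>a. list_encode (map (\<lambda>p.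
    list_encode (map (\<lambda>t. Ecode x a p t) [0..<N_c x])) [0..<N_c x])) [0..<k_c x + 2]), 3)), 0)"

lemma rc_wa_c: "rcomp k X \<Longrightarrow> rcomp k (\<lambda>xs. wa_c (X xs))"
  unfolding wa_c_def by (intro rc_fst_dec)
lemma rc_s_c: "rcomp k X \<Longrightarrow> rcomp k (\<lambda>xs. s_c (X xs))"
  unfolding s_c_def by (intro rc_fst_dec rc_snd_dec)
lemma rc_s'_c: "rcomp k X \<Longrightarrow> rcomp k (\<lambda>xs. s'_c (X xs))"
  unfolding s'_c_def by (intro rc_snd_dec)
lemma rc_n_c: "rcomp k X \<Longrightarrow> rcomp k (\<lambda>xs. n_c (X xs))"
  unfolding n_c_def by (intro rc_fst_dec rc_wa_c)
lemma rc_Mc_c: "rcomp k X \<Longrightarrow> rcomp k (\<lambda>xs. Mc_c (X xs))"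
  unfolding Mc_c_def by (intro rc_fst_dec rc_snd_dec rc_wa_c)
lemma rc_Fc_c: "rcomp k X \<Longrightarrow> rcomp k (\<lambda>xs. Fc_c (X xs))"
  unfolding Fc_c_def by (intro rc_snd_dec rc_wa_c)
lemma rc_k_c: "rcomp k X \<Longrightarrow> rcomp k (\<lambda>xs. k_c (X xs))"
  unfolding k_c_def by (intro rc_lenc rc_Mc_c)
lemma rc_N_c: "rcomp k X \<Longrightarrow> rcomp k (\<lambda>xs. N_c (X xs))"
  unfolding N_c_def by (intro rc_add rc_mult rc_const rc_n_c rc_k_c)
lemma rc_Mcode: "rcomp k X \<Longrightarrow> rcomp k B \<Longrightarrow> rcomp k Q \<Longrightarrow> rcomp k T \<Longrightarrow>
   rcomp k (\<lambda>xs. Mcode (X xs) (B xs) (Q xs) (T xs))"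
  unfolding Mcode_def by (intro rc_nthc rc_Mc_c)

lemma rc_div: "rcomp k a \<Longrightarrow> rcomp k b \<Longrightarrow> rcomp k (\<lambda>xs. a xs div b xs)"
  using rc_divc[of k a b] by (simp add: divc_correct)
lemma rc_mod: "rcomp k a \<Longrightarrow> rcomp k b \<Longrightarrow> rcomp k (\<lambda>xs. a xs mod b xs)"
  using rc_modc[of k a b] by (simp add: modc_correct)

lemma rc_Ecode: "rcomp k X \<Longrightarrow> rcomp k Aa \<Longrightarrow> rcomp k Pp \<Longrightarrow> rcomp k T \<Longrightarrow>
   rcomp k (\<lambda>xs. Ecode (X xs) (Aa xs) (Pp xs) (T xs))"
  unfolding Ecode_def WG_def
  by (intro rc_if rp_and rp_or rp_not rp_eq rp_le rp_lt rp_memc rc_add rc_sub rc_mult rc_div rc_mod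
        rc_suc rc_const rc_Mcode rc_n_c rc_k_c rc_s_c rc_s'_c rc_Fc_c)


lemma rc_Fout: "rcomp 1 (\<lambda>xs. Fout (xs ! 0))"
proof -
  have r3: "rcomp (Suc (Suc (Suc (Suc 0)))) (\<lambda>ws. Ecode (ws ! 3) (ws ! 2) (ws ! 1) (ws ! 0))"
    by (intro rc_Ecode rc_proj) simp_all
  have L2: "rcomp (Suc (Suc (Suc 0))) (\<lambda>zs. N_c (zs ! 2))" by (intro rc_N_c rc_proj) simp
  have r2: "rcomp (Suc (Suc (Suc 0))) (\<lambda>zs. list_encode (map (\<lambda>t. Ecode (zs ! 2) (zs ! 1) (zs ! 0) t) [0..<N_c (zs ! 2)]))"
    by (rule rc_cong[OF rc_build[OF r3 L2]]) simp
  have L1: "rcomp (Suc (Suc 0)) (\<lambda>ys. N_c (ys ! 1))" by (intro rc_N_c rc_proj) simp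
  have r1: "rcomp (Suc (Suc 0)) (\<lambda>ys. list_encode (map (\<lambda>p. list_encode (map (\<lambda>t. Ecode (ys ! 1) (ys ! 0) p t)
      [0..<N_c (ys ! 1)])) [0..<N_c (ys ! 1)]))"
    by (rule rc_cong[OF rc_build[OF r2 L1]]) simp
  have L0: "rcomp (Suc 0) (\<lambda>xs. k_c (xs ! 0) + 2)" by (intro rc_add rc_k_c rc_const rc_proj) simp
  have r0': "rcomp (Suc 0) (\<lambda>xs. list_encode (map (\<lambda>a. list_encode (map (\<lambda>p. list_encode (map (\<lambda>t. Ecode (xs ! 0) a p t)
      [0..<N_c (xs ! 0)])) [0..<N_c (xs ! 0)])) [0..<k_c (xs ! 0) + 2]))"
    by (rule rc_cong[OF rc_build[OF r1 L0]]) simp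
  then have r0: "rcomp 1 (\<lambda>xs. list_encode (map (\<lambda>a. list_encode (map (\<lambda>p. list_encode (map (\<lambda>t. Ecode (xs ! 0) a p t)
      [0..<N_c (xs ! 0)])) [0..<N_c (xs ! 0)])) [0..<k_c (xs ! 0) + 2]))"
    by simp
  show ?thesis unfolding Fout_def
    by (intro rc_penc rc_N_c rc_const r0 rc_proj) simp
qed

lemma computable_Fout: "computable Fout"
proof -
  obtain p where p: "\<forall>xs. length xs = 1 \<longrightarrow> rec_eval p xs (Fout (xs ! 0))"
    using rc_Fout unfolding rcomp_def by blast
  show ?thesis unfolding computable_def
    by (rule exI[of _ p]) (use p in \<open>auto dest: spec[of _ "[_]"]\<close>)
qed

context red
begin

lemma Fout_eq: "Fout (enc_bigO_inst A s s') = enc_PA P 0"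
proof -
  obtain n0 Ms Fl where A: "A = (n0, Ms, Fl)" by (cases A) auto
  define x where "x = enc_bigO_inst A s s'"
  define f1 where "f1 = (\<lambda>m. list_encode (map (\<lambda>r. list_encode (map enc_rat r)) m))"
  have ewa: "enc_wa A = prod_encode (n0, prod_encode (list_encode (map f1 Ms), list_encode Fl))"
    unfolding enc_wa_def A f1_def by simp
  have xe: "x = prod_encode (enc_wa A, prod_encode (s, s'))" unfolding x_def enc_bigO_inst_def by simp
  have wa: "wa_c x = enc_wa A" unfolding wa_c_def xe fst_dec_correct by simp
  have sx: "s_c x = s" "s'_c x = s'"
    unfolding s_c_def s'_c_def xe fst_dec_correct snd_dec_correct by simp_all
  have nx: "n_c x = n" unfolding n_c_def wa ewa fst_dec_correct by (simp add: states_def A)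
  have Mx: "Mc_c x = list_encode (map f1 Ms)"
    unfolding Mc_c_def wa ewa fst_dec_correct snd_dec_correct by simp
  have Fx: "Fc_c x = list_encode Fl"
    unfolding Fc_c_def wa ewa fst_dec_correct snd_dec_correct by simp
  have kx: "k_c x = k" unfolding k_c_def Mx lenc_LE by (simp add: nletters_def A)
  have Fiff: "memc q (Fc_c x) \<longleftrightarrow> q \<in> F" for q
    unfolding Fx memc_LE by (simp add: finals_def A)
  have lens: "length (Ms ! b) = n" "\<forall>r\<in>set (Ms ! b). length r = n" if "b < k" for b
    using wf that unfolding well_formed_def by (auto simp: A states_def nletters_def)
  have Mc: "Mcode x b q t = enc_rat (M b q t)" if "b < k" "q < n" "t < n" for b q t
  proof -
    have bl: "b < length Ms" using that by (simp add: nletters_def A)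
    have ql: "q < length (Ms ! b)" using lens(1)[OF that(1)] that by simp
    have tl: "t < length (Ms ! b ! q)" using lens(2)[OF that(1)] ql that by (simp add: nth_mem)
    show ?thesis unfolding Mcode_def Mx using bl ql tl
      by (simp add: nthc_LE f1_def wt_def A)
  qed
  have Ec: "Ecode x a p t = enc_rat (W a p t)" for a p t
  proof -
    have "Ecode x a p t = WG n k (\<lambda>q. q \<in> F) s s' (Mcode x) 1 8 12 a p t"
      unfolding Ecode_def nx kx sx Fiff by simp
    also have "\<dots> = WG n k (\<lambda>q. q \<in> F) s s' (\<lambda>b q t. enc_rat (M b q t)) (enc_rat 0) (enc_rat 1) (enc_rat (1/2)) a p t"
      unfolding enc_rat_0 enc_rat_1 enc_rat_half by (rule WG_cong) (simp add: Mc)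
    also have "\<dots> = enc_rat (W a p t)" unfolding W_def by (rule WG_map[symmetric])
    finally show ?thesis .
  qed
  have Nx: "N_c x = N" unfolding N_c_def N_def nx kx ..
  have LE1: "list_encode [1] = 3" by (simp add: prod_encode_def numeral_eq_Suc)
  have pe: "prod_encode (Suc 0, 0) = 2" by (simp add: prod_encode_def numeral_eq_Suc)
  show ?thesis
    unfolding x_def[symmetric] Fout_def enc_PA_def enc_wa_def Nx kx Ec
    by (simp add: P_def LE1 pe o_def del: upt_Suc)
qed

lemma bigO_iff: "big_O A s s' \<longleftrightarrow> \<not> value1 P 0"
proof
  assume b: "big_O A s s'"
  then obtain C :: real where C: "0 < C" and bnd: "\<forall>w\<in>words A. real_of_rat (nu A s w) \<le> C * real_of_rat (nu A s' w)"
    unfolding big_O_def by blast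
  show "\<not> value1 P 0"
  proof
    assume "value1 P 0"
    moreover have "0 < 1 - C / (1 + C)" using C by (simp add: field_simps)
    ultimately obtain v where v: "v \<in> words P" "1 - (1 - C / (1 + C)) < real_of_rat (nu P 0 v)"
      unfolding value1_def by blast
    have "real_of_rat (nu P 0 v) \<le> C / (1 + C)"
      using invariant[OF C bnd] v(1) wordsP_iff by blast
    then show False using v(2) by simp
  qed
next
  assume "\<not> value1 P 0"
  then show "big_O A s s'" using value_dir by blast
qed

end

theorem proposition5p3:
  shows "\<exists>f b. computable f \<and>
    (\<forall>A s s'. is_LMC A \<and> s < states A \<and> s' < states A \<longrightarrow>
       (\<exists>P qs. is_PA P qs \<and> f (enc_bigO_inst A s s') = enc_PA P qs \<and>
               (big_O A s s' \<longleftrightarrow> (value1 P qs \<longleftrightarrow> b))))"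
proof (intro exI[of _ Fout] exI[of _ False] conjI computable_Fout allI impI)
  fix A s s' assume h: "is_LMC A \<and> s < states A \<and> s' < states A"
  interpret r: red A s s' using h by unfold_locales auto
  show "\<exists>P qs. is_PA P qs \<and> Fout (enc_bigO_inst A s s') = enc_PA P qs \<and> (big_O A s s' \<longleftrightarrow> (value1 P qs \<longleftrightarrow> False))"
    using r.P_is_PA r.Fout_eq r.bigO_iff by blast
qed

end
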